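(* Let $\mathcal{X}\subseteq\mathcal{P}(\mathbb{N})$ be closed under enumeration equivalence and let $f\colon\mathcal{X}\to\mathcal{P}(\mathbb{N})$ be uniformly $e$-invariant. For any $A,B\in\mathcal{X}$ with $f(A)\neq f(B)$, we have $f(A\oplus\varnothing)\neq f(B\oplus\varnothing)$ and $f(\varnothing\oplus A)\neq f(\varnothing\oplus B)$.
   Context: $X\oplus Y=\{2n:n\in X\}\cup\{2n+1:n\in Y\}$ (note $A\oplus\varnothing\equiv_e A\equiv_e\varnothing\oplus A$, so these sets lie in $\mathcal{X}$). Enumeration reducibility: for $A,B\subseteq\mathbb{N}$, $A\le_e B$ if $A=\Gamma(B):=\{n:\exists D\subseteq B,\ \langle n,D\rangle\in\Gamma\}$ for some c.e. set $\Gamma$ of pairs $\langle n,D\rangle$ with $D$ finite (canonical index); $(\Gamma_i)_{i\in\mathbb{N}}$ is the standard computable numbering of these enumeration operators. $A\equiv_e B$ iff $A\le_e B\le_e A$. Let $\mathcal{X}\subseteq\mathcal{P}(\mathbb{N})$ be closed under $\equiv_e$. A function $f\colon\mathcal{X}\to\mathcal{P}(\mathbb{N})$ is $e$-invariant if $A\equiv_e B$ implies $f(A)\equiv_e f(B)$. Write $A\equiv_e B$ via $\langle i,j\rangle$ if $\Gamma_i(A)=B$ and $\Gamma_j(B)=A$ (with $\langle\cdot,\cdot\rangle$ a fixed computable pairing bijection). A function $u\colon\mathbb{N}\to\mathbb{N}$ is a uniformity function for $f$ if for all $A,B\in\mathcal{X}$ and all $i,j$, whenever $A\equiv_e B$ via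 $\langle i,j\rangle$ then $f(A)\equiv_e f(B)$ via $u(\langle i,j\rangle)$. $f$ is uniformly $e$-invariant if it has some uniformity function. *)

theory Defs
  imports Main "HOL-Library.Nat_Bijection"
begin

datatype recf = Zero | Succ | Proj nat | Comp recf "recf list" | Prim recf recf | Mn recf

inductive eval :: "recf \<Rightarrow> nat list \<Rightarrow> nat \<Rightarrow> bool" where
  zero: "eval Zero xs 0"
| succ: "eval Succ (x # xs) (Suc x)"
| proj: "i < length xs \<Longrightarrow> eval (Proj i) xs (xs ! i)"
| comp: "length ys = length gs \<Longrightarrow> (\<forall>k < length gs. eval (gs ! k) xs (ys ! k))
          \<Longrightarrow> eval f ys z \<Longrightarrow> eval (Comp f gs) xs z"
| prim0: "eval f xs y \<Longrightarrow> eval (Prim f g) (0 # xs) y"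
| primS: "eval (Prim f g) (n # xs) y \<Longrightarrow> eval g (n # y # xs) z
          \<Longrightarrow> eval (Prim f g) (Suc n # xs) z"
| mn: "eval f (n # xs) 0 \<Longrightarrow> (\<forall>m < n. \<exists>y. eval f (m # xs) (Suc y))
          \<Longrightarrow> eval (Mn f) xs n"

definition ce :: "nat set \<Rightarrow> bool" where
  "ce A \<longleftrightarrow> (\<exists>f. \<forall>x. x \<in> A \<longleftrightarrow> (\<exists>y. eval f [x] y))"

definition enum_op :: "nat set \<Rightarrow> nat set \<Rightarrow> nat set" where
  "enum_op W A = {n. \<exists>D. finite D \<and> D \<subseteq> A \<and> prod_encode (n, set_encode D) \<in> W}"

text \<open>A computable numbering of all c.e. sets (hence of all enumeration operators):
  every set in it is c.e., every c.e. set occurs, and the numbering is uniformly c.e.\<close>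
definition ce_numbering :: "(nat \<Rightarrow> nat set) \<Rightarrow> bool" where
  "ce_numbering W \<longleftrightarrow> (\<forall>i. ce (W i)) \<and> (\<forall>A. ce A \<longrightarrow> (\<exists>i. W i = A))
      \<and> ce {prod_encode (i, x) | i x. x \<in> W i}"

definition Gamma :: "(nat \<Rightarrow> nat set) \<Rightarrow> nat \<Rightarrow> nat set \<Rightarrow> nat set" where
  "Gamma W i A = enum_op (W i) A"

definition e_reducible :: "nat set \<Rightarrow> nat set \<Rightarrow> bool" where
  "e_reducible A B \<longleftrightarrow> (\<exists>G. ce G \<and> A = enum_op G B)"

definition e_equiv :: "nat set \<Rightarrow> nat set \<Rightarrow> bool" where
  "e_equiv A B \<longleftrightarrow> e_reducible A B \<and> e_reducible B A"

definition closed_e_equiv :: "nat set set \<Rightarrow> bool" where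
  "closed_e_equiv X \<longleftrightarrow> (\<forall>A B. A \<in> X \<longrightarrow> e_equiv A B \<longrightarrow> B \<in> X)"

definition e_equiv_via :: "(nat \<Rightarrow> nat set) \<Rightarrow> nat set \<Rightarrow> nat set \<Rightarrow> nat \<Rightarrow> bool" where
  "e_equiv_via W A B k \<longleftrightarrow>
     Gamma W (fst (prod_decode k)) A = B \<and> Gamma W (snd (prod_decode k)) B = A"

definition uniformity_function ::
  "(nat \<Rightarrow> nat set) \<Rightarrow> nat set set \<Rightarrow> (nat set \<Rightarrow> nat set) \<Rightarrow> (nat \<Rightarrow> nat) \<Rightarrow> bool" where
  "uniformity_function W X f u \<longleftrightarrow>
     (\<forall>A\<in>X. \<forall>B\<in>X. \<forall>i j. e_equiv_via W A B (prod_encode (i, j))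
        \<longrightarrow> e_equiv_via W (f A) (f B) (u (prod_encode (i, j))))"

definition uniformly_e_invariant ::
  "(nat \<Rightarrow> nat set) \<Rightarrow> nat set set \<Rightarrow> (nat set \<Rightarrow> nat set) \<Rightarrow> bool" where
  "uniformly_e_invariant W X f \<longleftrightarrow> (\<exists>u. uniformity_function W X f u)"

definition join :: "nat set \<Rightarrow> nat set \<Rightarrow> nat set" (infixl "\<oplus>\<^sub>e" 65) where
  "X \<oplus>\<^sub>e Y = {2 * n | n. n \<in> X} \<union> {2 * n + 1 | n. n \<in> Y}"

end

theory Submission
  imports Defs
begin

lemma eval_Zero: "eval Zero xs y \<longleftrightarrow> y = 0"
  by (auto elim: eval.cases intro: eval.intros)

lemma eval_Succ: "eval Succ (x # xs) y \<longleftrightarrow> y = Suc x"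
  by (auto elim: eval.cases intro: eval.intros)

lemma eval_Proj: "i < length xs \<Longrightarrow> eval (Proj i) xs y \<longleftrightarrow> y = xs ! i"
  by (auto elim: eval.cases intro: eval.intros)

lemma eval_Comp:
  assumes "length vs = length gs"
    and "\<And>k y. k < length gs \<Longrightarrow> eval (gs ! k) xs y \<longleftrightarrow> y = vs ! k"
  shows "eval (Comp f gs) xs z \<longleftrightarrow> eval f vs z"
proof
  assume "eval (Comp f gs) xs z"
  then obtain ys where ys: "length ys = length gs" "\<forall>k < length gs. eval (gs ! k) xs (ys ! k)"
    "eval f ys z" by (cases rule: eval.cases) auto
  have "ys = vs" using ys(1,2) assms by (intro nth_equalityI) auto
  then show "eval f vs z" using ys(3) by simp
next
  assume "eval f vs z"
  then show "eval (Comp f gs) xs z" using assms by (intro eval.comp) auto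
qed

lemma eval_Prim:
  assumes "\<And>y. eval f xs y \<longleftrightarrow> y = a"
    and "\<And>n y z. eval g (n # y # xs) z \<longleftrightarrow> z = G n y"
  shows "eval (Prim f g) (n # xs) z \<longleftrightarrow> z = rec_nat a G n"
proof (induction n arbitrary: z)
  case 0
  show ?case
  proof
    assume "eval (Prim f g) (0 # xs) z"
    then show "z = rec_nat a G 0" using assms(1) by (cases rule: eval.cases) auto
  next
    assume "z = rec_nat a G 0"
    then show "eval (Prim f g) (0 # xs) z" using assms(1) by (auto intro: eval.prim0)
  qed
next
  case (Suc n)
  show ?case
  proof
    assume "eval (Prim f g) (Suc n # xs) z"
    then show "z = rec_nat a G (Suc n)" using assms(2) Suc.IH by (cases rule: eval.cases) auto
  next
    assume "z = rec_nat a G (Suc n)"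
    then show "eval (Prim f g) (Suc n # xs) z" using assms(2) Suc.IH
      by (auto intro: eval.primS)
  qed
qed

lemma eval_Mn_dom:
  assumes "\<And>n y. eval f (n # xs) y \<longleftrightarrow> y = F n"
  shows "(\<exists>y. eval (Mn f) xs y) \<longleftrightarrow> (\<exists>n. F n = 0)"
proof
  assume "\<exists>y. eval (Mn f) xs y"
  then obtain y where "eval (Mn f) xs y" by blast
  then show "\<exists>n. F n = 0" using assms by (cases rule: eval.cases) auto
next
  assume "\<exists>n. F n = 0"
  define n where "n = (LEAST n. F n = 0)"
  have "F n = 0" unfolding n_def using \<open>\<exists>n. F n = 0\<close> by (rule LeastI_ex)
  moreover have "\<forall>m < n. \<exists>y. eval f (m # xs) (Suc y)"
  proof (intro allI impI)
    fix m assume "m < n"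
    then have "F m \<noteq> 0" unfolding n_def using not_less_Least by blast
    then have "F m = Suc (F m - 1)" by simp
    then have "eval f (m # xs) (Suc (F m - 1))" using assms by simp
    then show "\<exists>y. eval f (m # xs) (Suc y)" by blast
  qed
  ultimately have "eval (Mn f) xs n" using assms by (intro eval.mn) auto
  then show "\<exists>y. eval (Mn f) xs y" by blast
qed

definition computes :: "recf \<Rightarrow> nat list \<Rightarrow> nat \<Rightarrow> bool" where
  "computes p xs a \<longleftrightarrow> (\<forall>y. eval p xs y \<longleftrightarrow> y = a)"

lemma c_Zero: "a = 0 \<Longrightarrow> computes Zero xs a"
  by (simp add: computes_def eval_Zero)

lemma c_Succ: "a = Suc x \<Longrightarrow> computes Succ [x] a"
  by (simp add: computes_def eval_Succ)

lemma c_Proj: "i < length xs \<Longrightarrow> a = xs ! i \<Longrightarrow> computes (Proj i) xs a"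
  by (simp add: computes_def eval_Proj)

lemma c_Comp1: "computes g xs a \<Longrightarrow> computes f [a] c \<Longrightarrow> computes (Comp f [g]) xs c"
  unfolding computes_def
  by (subst eval_Comp[where vs="[a]"]) (auto simp: less_Suc_eq)

lemma c_Comp2: "computes g xs a \<Longrightarrow> computes h xs b \<Longrightarrow> computes f [a, b] c
   \<Longrightarrow> computes (Comp f [g, h]) xs c"
  unfolding computes_def
  by (subst eval_Comp[where vs="[a, b]"]) (auto simp: less_Suc_eq nth_Cons')

lemma c_Prim: "computes f xs a \<Longrightarrow> (\<And>n y. computes g (n # y # xs) (G n y))
   \<Longrightarrow> c = rec_nat a G n \<Longrightarrow> computes (Prim f g) (n # xs) c"
  unfolding computes_def using eval_Prim[of f xs a g G] by simp

lemmas c_base = c_Zero c_Succ c_Proj c_Comp1 c_Comp2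

definition "ADD = Prim (Proj 0) (Comp Succ [Proj 1])"
definition "PRED = Prim Zero (Proj 0)"
definition "MONUS = Prim (Proj 0) (Comp PRED [Proj 1])"
definition "POW2 = Prim (Comp Succ [Zero]) (Comp ADD [Proj 1, Proj 1])"
definition "TRI = Prim Zero (Comp ADD [Proj 1, Comp Succ [Proj 0]])"
definition "PAIR = Comp ADD [Comp TRI [Comp ADD [Proj 0, Proj 1]], Proj 0]"

lemma c_ADD: "c = n + x \<Longrightarrow> computes ADD [n, x] c"
proof -
  assume c: "c = n + x"
  have "rec_nat x (\<lambda>n y. Suc y) n = n + x" by (induction n) auto
  then show ?thesis unfolding ADD_def using c
    by (intro c_Prim[where G="\<lambda>n y. Suc y"] c_base) auto
qed

lemma c_PRED: "c = n - 1 \<Longrightarrow> computes PRED [n] c"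
proof -
  assume c: "c = n - 1"
  have "rec_nat 0 (\<lambda>n y. n) n = n - 1" by (induction n) auto
  then show ?thesis unfolding PRED_def using c
    by (intro c_Prim[where G="\<lambda>n y. n"] c_base) auto
qed

lemma c_MONUS: "c = x - n \<Longrightarrow> computes MONUS [n, x] c"
proof -
  assume c: "c = x - n"
  have "rec_nat x (\<lambda>n y. y - 1) n = x - n" by (induction n) auto
  then show ?thesis unfolding MONUS_def using c
    by (intro c_Prim[where G="\<lambda>n y. y - 1"] c_base c_PRED) auto
qed

lemma c_POW2: "c = 2 ^ n \<Longrightarrow> computes POW2 [n] c"
proof -
  assume c: "c = 2 ^ n"
  have "rec_nat 1 (\<lambda>n y. y + y) n = (2::nat) ^ n" by (induction n) auto
  then show ?thesis unfolding POW2_def using c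
    by (intro c_Prim[where G="\<lambda>n y. y + y"] c_base c_ADD) auto
qed

lemma c_TRI: "c = triangle n \<Longrightarrow> computes TRI [n] c"
proof -
  assume c: "c = triangle n"
  have "rec_nat 0 (\<lambda>n y. y + Suc n) n = triangle n" by (induction n) auto
  then show ?thesis unfolding TRI_def using c
    by (intro c_Prim[where G="\<lambda>n y. y + Suc n"] c_base c_ADD) auto
qed

lemma c_PAIR: "c = prod_encode (a, b) \<Longrightarrow> computes PAIR [a, b] c"
  unfolding PAIR_def prod_encode_def
  by (intro c_base c_ADD c_TRI) auto

definition "DIST H = Comp ADD [Comp MONUS [Comp H [Proj 0], Proj 1],
   Comp MONUS [Proj 1, Comp H [Proj 0]]]"

lemma c_DIST:
  assumes "\<And>n. computes H [n] (h n)"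
  shows "computes (DIST H) [n, x] ((x - h n) + (h n - x))"
  unfolding DIST_def by (intro c_base c_ADD c_MONUS assms) (auto intro: assms)

lemma ce_range:
  assumes "\<And>n. computes H [n] (h n)"
  shows "ce (range h)"
  unfolding ce_def
proof (intro exI allI)
  fix x
  have "(\<exists>y. eval (Mn (DIST H)) [x] y) \<longleftrightarrow> (\<exists>n. (x - h n) + (h n - x) = 0)"
    by (rule eval_Mn_dom) (use c_DIST[OF assms] in \<open>simp add: computes_def\<close>)
  also have "\<dots> \<longleftrightarrow> x \<in> range h" by auto
  finally show "x \<in> range h \<longleftrightarrow> (\<exists>y. eval (Mn (DIST H)) [x] y)" by simp
qed

definition "DBL c = (if c = (0::nat) then Comp ADD [Proj 0, Proj 0] else Comp Succ [Comp ADD [Proj 0, Proj 0]])"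

lemma c_DBL: "c \<le> 1 \<Longrightarrow> computes (DBL c) [n] (2 * n + c)"
  unfolding DBL_def by (cases "c = 0") (auto intro!: c_base c_ADD)

definition Tj :: "nat \<Rightarrow> nat set \<Rightarrow> nat set" where
  "Tj c Y = {2 * n + c | n. n \<in> Y}"

definition "Gf c = range (\<lambda>n. prod_encode (2 * n + c, set_encode {n}))"
definition "Gb c = range (\<lambda>n. prod_encode (n, set_encode {2 * n + c}))"

lemma set_encode_single: "set_encode {n} = 2 ^ n"
  using set_encode_insert[of "{}" n] by simp

lemma ce_Gf: "c \<le> 1 \<Longrightarrow> ce (Gf c)"
  unfolding Gf_def set_encode_single
  by (rule ce_range[where H="Comp PAIR [DBL c, Comp POW2 [Proj 0]]"])
     (intro c_base c_PAIR c_POW2 c_DBL; auto intro: c_DBL)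

lemma ce_Gb: "c \<le> 1 \<Longrightarrow> ce (Gb c)"
  unfolding Gb_def set_encode_single
  by (rule ce_range[where H="Comp PAIR [Proj 0, Comp POW2 [DBL c]]"])
     (intro c_base c_PAIR c_POW2 c_DBL; auto intro: c_DBL)

lemma enum_Gf: "enum_op (Gf c) Y = Tj c Y"
proof -
  have "m \<in> enum_op (Gf c) Y \<longleftrightarrow> m \<in> Tj c Y" for m
  proof
    assume "m \<in> enum_op (Gf c) Y"
    then obtain D n where "finite D" "D \<subseteq> Y"
      "prod_encode (m, set_encode D) = prod_encode (2 * n + c, set_encode {n})"
      unfolding enum_op_def Gf_def by auto
    then have "m = 2 * n + c" "D = {n}" using prod_encode_eq set_encode_eq
      by (auto simp del: set_encode_insert)
    then show "m \<in> Tj c Y" using \<open>D \<subseteq> Y\<close> unfolding Tj_def by auto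
  next
    assume "m \<in> Tj c Y"
    then obtain n where "n \<in> Y" "m = 2 * n + c" unfolding Tj_def by auto
    then show "m \<in> enum_op (Gf c) Y" unfolding enum_op_def Gf_def
      by (intro CollectI exI[of _ "{n}"]) (auto simp del: set_encode_insert)
  qed
  then show ?thesis by blast
qed

lemma enum_Gb: "enum_op (Gb c) (Tj c Y) = Y"
proof -
  have "m \<in> enum_op (Gb c) (Tj c Y) \<longleftrightarrow> m \<in> Y" for m
  proof
    assume "m \<in> enum_op (Gb c) (Tj c Y)"
    then obtain D n where "finite D" "D \<subseteq> Tj c Y"
      "prod_encode (m, set_encode D) = prod_encode (n, set_encode {2 * n + c})"
      unfolding enum_op_def Gb_def by auto
    then have "m = n" "D = {2 * n + c}" using prod_encode_eq set_encode_eq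
      by (auto simp del: set_encode_insert)
    then show "m \<in> Y" using \<open>D \<subseteq> Tj c Y\<close> unfolding Tj_def by auto
  next
    assume "m \<in> Y"
    then show "m \<in> enum_op (Gb c) (Tj c Y)" unfolding enum_op_def Gb_def Tj_def
      by (intro CollectI exI[of _ "{2 * m + c}"]) (auto simp del: set_encode_insert)
  qed
  then show ?thesis by blast
qed

lemma key:
  assumes W: "ce_numbering W"
    and X: "closed_e_equiv X"
    and U: "uniformly_e_invariant W X f"
    and AB: "A \<in> X" "B \<in> X"
    and ne: "f A \<noteq> f B"
    and c: "c \<le> 1"
  shows "f (Tj c A) \<noteq> f (Tj c B)"
proof
  assume eq: "f (Tj c A) = f (Tj c B)"
  obtain i where i: "W i = Gf c" using W ce_Gf[OF c] unfolding ce_numbering_def by blast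
  obtain j where j: "W j = Gb c" using W ce_Gb[OF c] unfolding ce_numbering_def by blast
  obtain u where u: "uniformity_function W X f u" using U unfolding uniformly_e_invariant_def by blast
  have via: "e_equiv_via W Y (Tj c Y) (prod_encode (i, j))" for Y
    unfolding e_equiv_via_def Gamma_def using i j enum_Gf enum_Gb by simp
  have inX: "Tj c Y \<in> X" if "Y \<in> X" for Y
  proof -
    have "e_equiv Y (Tj c Y)" unfolding e_equiv_def e_reducible_def
      using ce_Gf[OF c] ce_Gb[OF c] enum_Gf enum_Gb by metis
    then show ?thesis using X that unfolding closed_e_equiv_def by blast
  qed
  let ?k = "snd (prod_decode (u (prod_encode (i, j))))"
  have "Gamma W ?k (f (Tj c Y)) = f Y" if "Y \<in> X" for Y
    using u via[of Y] that inX[OF that] unfolding uniformity_function_def e_equiv_via_def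
    by blast
  then have "f A = f B" using AB eq by metis
  then show False using ne by simp
qed

lemma join_Tj: "Y \<oplus>\<^sub>e {} = Tj 0 Y" "{} \<oplus>\<^sub>e Y = Tj 1 Y"
  unfolding join_def Tj_def by auto

theorem lemma5p2:
  fixes W :: "nat \<Rightarrow> nat set" and X :: "nat set set" and f :: "nat set \<Rightarrow> nat set"
    and A B :: "nat set"
  assumes "ce_numbering W"
    and "closed_e_equiv X"
    and "uniformly_e_invariant W X f"
    and "A \<in> X" and "B \<in> X"
    and "f A \<noteq> f B"
  shows "f (A \<oplus>\<^sub>e {}) \<noteq> f (B \<oplus>\<^sub>e {}) \<and> f ({} \<oplus>\<^sub>e A) \<noteq> f ({} \<oplus>\<^sub>e B)"
  unfolding join_Tj using key[OF assms] by simp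

end
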